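(* Let $G$ be a locally compact group and let $f,g,f_1,\dots,f_n,g_1,\dots,g_n\in C_0(G)$ be non-zero functions such that $f(xy)g(y)=\sum_{i=1}^n f_i(x)g_i(y)$ for all $x,y\in G$. Then $G$ has a compact open subgroup $H$, and there are functions $f'_j\in C_0(G)$ and $g'_j\in C(H)$ ($j=1,\dots,n$) such that $f(xy)=\sum_{j=1}^n f'_j(x)g'_j(y)$ for all $x\in G$, $y\in H$.
   Context: $C_0(G)$ denotes the continuous complex functions on $G$ vanishing at infinity. *)

theory Defs
  imports "HOL-Analysis.Analysis" "HOL-Algebra.Group"
begin

definition topological_group :: "('a, 'b) monoid_scheme \<Rightarrow> 'a topology \<Rightarrow> bool" where
  "topological_group G T \<longleftrightarrow>
     group G \<and> topspace T = carrier G \<and>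
     continuous_map (prod_topology T T) T (\<lambda>(x, y). x \<otimes>\<^bsub>G\<^esub> y) \<and>
     continuous_map T T (\<lambda>x. inv\<^bsub>G\<^esub> x)"

definition locally_compact_group :: "('a, 'b) monoid_scheme \<Rightarrow> 'a topology \<Rightarrow> bool" where
  "locally_compact_group G T \<longleftrightarrow>
     topological_group G T \<and> Hausdorff_space T \<and> locally_compact_space T"

definition C0 :: "'a topology \<Rightarrow> ('a \<Rightarrow> complex) \<Rightarrow> bool" where
  "C0 T f \<longleftrightarrow> continuous_map T euclidean f \<and>
     (\<forall>e>0. \<exists>K. compactin T K \<and> (\<forall>x \<in> topspace T - K. norm (f x) < e))"

end

theory Submission
  imports Defs
begin

inductive_set lspan :: "('a \<Rightarrow> complex) set \<Rightarrow> ('a \<Rightarrow> complex) set" for S where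
  lspan_zero: "(\<lambda>x. 0) \<in> lspan S"
| lspan_base: "w \<in> S \<Longrightarrow> w \<in> lspan S"
| lspan_add: "w \<in> lspan S \<Longrightarrow> w' \<in> lspan S \<Longrightarrow> (\<lambda>x. w x + w' x) \<in> lspan S"
| lspan_smult: "w \<in> lspan S \<Longrightarrow> (\<lambda>x. c * w x) \<in> lspan S"

lemma lspan_mono: assumes "S \<subseteq> lspan T" shows "w \<in> lspan S \<Longrightarrow> w \<in> lspan T"
  by (induction rule: lspan.induct) (use assms in \<open>auto intro: lspan.intros\<close>)

lemma lspan_sum: "finite J \<Longrightarrow> (\<forall>j\<in>J. w j \<in> lspan S) \<Longrightarrow> (\<lambda>x. \<Sum>j\<in>J. c j * w j x) \<in> lspan S"
proof (induction J rule: finite_induct)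
  case empty then show ?case by (simp add: lspan_zero)
next
  case (insert a J)
  then show ?case by (simp add: lspan_add lspan_smult)
qed

lemma C0_zero: "C0 T (\<lambda>x. 0)"
  unfolding C0_def by (auto intro!: exI[of _ "{}"])

lemma C0_add: assumes "C0 T f" "C0 T g" shows "C0 T (\<lambda>x. f x + g x)"
  unfolding C0_def
proof (intro conjI allI impI)
  show "continuous_map T euclidean (\<lambda>x. f x + g x)"
    using assms unfolding C0_def by (simp add: continuous_map_add)
  fix e :: real assume "e > 0"
  then obtain K1 K2 where K: "compactin T K1" "\<forall>x\<in>topspace T - K1. norm (f x) < e/2"
     "compactin T K2" "\<forall>x\<in>topspace T - K2. norm (g x) < e/2"
    using assms unfolding C0_def by (meson half_gt_zero)
  then show "\<exists>K. compactin T K \<and> (\<forall>x\<in>topspace T - K. norm (f x + g x) < e)"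
  proof (intro exI[of _ "K1 \<union> K2"] conjI ballI)
    show "compactin T (K1 \<union> K2)" using \<open>compactin T K1\<close> \<open>compactin T K2\<close> by (simp add: compactin_Un)
    fix x assume "x \<in> topspace T - (K1 \<union> K2)"
    then have "norm (f x) < e/2" "norm (g x) < e/2" using K by auto
    then show "norm (f x + g x) < e" by (intro norm_triangle_lt) linarith
  qed
qed

lemma C0_smult: assumes "C0 T f" shows "C0 T (\<lambda>x. c * f x)"
  unfolding C0_def
proof (intro conjI allI impI)
  show "continuous_map T euclidean (\<lambda>x. c * f x)"
    using assms unfolding C0_def by (simp add: continuous_map_atin tendsto_mult_left)
  fix e :: real assume "e > 0"
  have np: "norm c + 1 > 0" using norm_ge_zero[of c] by linarith
  then have "e / (norm c + 1) > 0" using \<open>e > 0\<close> by (intro divide_pos_pos)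
  then obtain K where K: "compactin T K" "\<forall>x\<in>topspace T - K. norm (f x) < e / (norm c + 1)"
    using assms unfolding C0_def by blast
  have "norm (c * f x) < e" if "x \<in> topspace T - K" for x
  proof -
    have "norm (c * f x) = norm c * norm (f x)" by (simp add: norm_mult)
    also have "\<dots> \<le> (norm c + 1) * norm (f x)" by (simp add: mult_right_mono)
    also have "\<dots> < (norm c + 1) * (e / (norm c + 1))"
      using K(2) that np by (intro mult_strict_left_mono) auto
    also have "\<dots> = e" using np by simp
    finally show ?thesis .
  qed
  then show "\<exists>K. compactin T K \<and> (\<forall>x\<in>topspace T - K. norm (c * f x) < e)"
    using K by blast
qed

lemma C0_lspan: assumes "\<forall>w\<in>S. C0 T w" shows "w \<in> lspan S \<Longrightarrow> C0 T w"
  by (induction rule: lspan.induct) (use assms in \<open>auto intro: C0_zero C0_add C0_smult\<close>)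

lemma C0_bounded: assumes "C0 T f" shows "\<exists>B. \<forall>x\<in>topspace T. norm (f x) \<le> B"
proof -
  obtain K where K: "compactin T K" "\<forall>x\<in>topspace T - K. norm (f x) < 1"
    using assms unfolding C0_def by (meson zero_less_one)
  have "compactin euclidean (f ` K)"
    using K(1) assms unfolding C0_def by (blast intro: image_compactin)
  then have "bounded (f ` K)" by (simp add: compact_imp_bounded)
  then obtain B where B: "\<forall>y\<in>f ` K. norm y \<le> B" by (meson bounded_iff)
  show ?thesis
    by (rule exI[of _ "max B 1"]) (use B K(2) in \<open>force simp: le_max_iff_disj\<close>)
qed



lemma interp:
  fixes X :: "'a set" and u :: "nat \<Rightarrow> 'a \<Rightarrow> complex" and S :: "('a \<Rightarrow> complex) set"
  assumes "finite I" "X \<noteq> {}"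
    and "\<forall>\<phi>\<in>S. \<exists>c. \<forall>x\<in>X. \<phi> x = (\<Sum>i\<in>I. c i * u i x)"
  shows "\<exists>S0 q v. S0 \<subseteq> S \<and> finite S0 \<and> q ` I \<subseteq> X \<and> (\<forall>l\<in>I. v l \<in> lspan S0) \<and>
           (\<forall>\<phi>\<in>S. \<forall>x\<in>X. \<phi> x = (\<Sum>l\<in>I. \<phi> (q l) * v l x))"
  using assms
proof (induction "card I" arbitrary: I S u rule: less_induct)
  case less
  show ?case
  proof (cases "\<forall>\<phi>\<in>S. \<forall>x\<in>X. \<phi> x = 0")
    case True
    obtain x0 where "x0 \<in> X" using less.prems by blast
    show ?thesis
      by (rule exI[of _ "{}"], rule exI[of _ "\<lambda>_. x0"], rule exI[of _ "\<lambda>_ _. 0"])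
         (use True \<open>x0\<in>X\<close> in \<open>auto intro: lspan_zero\<close>)
  next
    case False
    then obtain \<phi>1 q1 where \<phi>1: "\<phi>1 \<in> S" "q1 \<in> X" "\<phi>1 q1 \<noteq> 0" by blast
    obtain c1 where c1: "\<forall>x\<in>X. \<phi>1 x = (\<Sum>i\<in>I. c1 i * u i x)" using less.prems \<phi>1 by blast
    define v1 where "v1 = (\<lambda>x. \<phi>1 x / \<phi>1 q1)"
    define d where "d = (\<lambda>i. c1 i / \<phi>1 q1)"
    have v1d: "\<forall>x\<in>X. v1 x = (\<Sum>i\<in>I. d i * u i x)"
      using c1 by (simp add: v1_def d_def sum_divide_distrib)
    have v1q1: "v1 q1 = 1" using \<phi>1 by (simp add: v1_def)
    obtain k0 where k0: "k0 \<in> I" "d k0 \<noteq> 0"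
    proof -
      have "(\<Sum>i\<in>I. d i * u i q1) \<noteq> 0" using v1d v1q1 \<phi>1(2) by auto
      then show ?thesis using that by (metis (no_types, lifting) mult_zero_left sum.neutral)
    qed
    define P where "P = (\<lambda>(w::'a\<Rightarrow>complex) x. w x - w q1 * v1 x)"
    define u' where "u' = (\<lambda>i. P (u i))"
    define I' where "I' = I - {k0}"
    have fI': "finite I'" using less.prems(1) by (simp add: I'_def)
    have II': "I = insert k0 I'" "k0 \<notin> I'" using k0 by (auto simp: I'_def)
    have PI: "\<forall>x\<in>X. P w x = (\<Sum>i\<in>I. e i * u' i x)" if "\<forall>x\<in>X. w x = (\<Sum>i\<in>I. e i * u i x)" for w e
    proof
      fix x assume "x \<in> X"
      then have "P w x = (\<Sum>i\<in>I. e i * u i x) - (\<Sum>i\<in>I. e i * u i q1) * v1 x"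
        using that \<phi>1(2) by (simp add: P_def)
      also have "\<dots> = (\<Sum>i\<in>I. e i * u' i x)"
        by (simp add: u'_def P_def sum_distrib_right right_diff_distrib sum_subtractf mult.assoc)
      finally show "P w x = (\<Sum>i\<in>I. e i * u' i x)" .
    qed
    have Pv1: "\<forall>x\<in>X. (\<Sum>i\<in>I. d i * u' i x) = 0"
      using PI[OF v1d] v1q1 by (simp add: P_def)
    have uk0: "u' k0 x = - (\<Sum>i\<in>I'. d i * u' i x) / d k0" if "x \<in> X" for x
    proof -
      have "d k0 * u' k0 x + (\<Sum>i\<in>I'. d i * u' i x) = 0"
        using Pv1 that II' fI' by simp
      then show ?thesis using k0(2) by (simp add: field_simps add_eq_0_iff)
    qed
    have S'span: "\<forall>\<psi>\<in>P ` S. \<exists>c. \<forall>x\<in>X. \<psi> x = (\<Sum>i\<in>I'. c i * u' i x)"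
    proof
      fix \<psi> assume "\<psi> \<in> P ` S"
      then obtain \<phi> where \<phi>: "\<phi> \<in> S" "\<psi> = P \<phi>" by blast
      obtain e where e: "\<forall>x\<in>X. \<phi> x = (\<Sum>i\<in>I. e i * u i x)" using less.prems \<phi> by blast
      show "\<exists>c. \<forall>x\<in>X. \<psi> x = (\<Sum>i\<in>I'. c i * u' i x)"
      proof (intro exI[of _ "\<lambda>i. e i - e k0 * d i / d k0"] ballI)
        fix x assume x: "x \<in> X"
        have "\<psi> x = (\<Sum>i\<in>I. e i * u' i x)" using PI[OF e] x \<phi> by simp
        also have "\<dots> = e k0 * u' k0 x + (\<Sum>i\<in>I'. e i * u' i x)" using II' fI' by simp
        also have "\<dots> = e k0 * (- (\<Sum>i\<in>I'. d i * u' i x) / d k0) + (\<Sum>i\<in>I'. e i * u' i x)"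
          using uk0[OF x] by simp
        also have "\<dots> = (\<Sum>i\<in>I'. (e i - e k0 * d i / d k0) * u' i x)"
          by (simp add: sum_distrib_left sum_divide_distrib left_diff_distrib sum_subtractf
               sum_negf algebra_simps)
        finally show "\<psi> x = (\<Sum>i\<in>I'. (e i - e k0 * d i / d k0) * u' i x)" .
      qed
    qed
    have "card I' < card I" unfolding I'_def by (rule card_Diff1_less[OF less.prems(1) k0(1)])
    from less.hyps[OF this fI' less.prems(2) S'span]
    obtain T0 q' v' where IH: "T0 \<subseteq> P ` S" "finite T0" "q' ` I' \<subseteq> X" "\<forall>l\<in>I'. v' l \<in> lspan T0"
        "\<forall>\<psi>\<in>P ` S. \<forall>x\<in>X. \<psi> x = (\<Sum>l\<in>I'. \<psi> (q' l) * v' l x)"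
      by blast
    obtain T where T: "T \<subseteq> S" "finite T" "T0 = P ` T"
      using finite_subset_image[OF IH(2) IH(1)] by blast
    define S0 where "S0 = insert \<phi>1 T"
    have PS0: "P \<phi> \<in> lspan S0" if "\<phi> \<in> T" for \<phi>
    proof -
      have "P \<phi> = (\<lambda>x. \<phi> x + (- (\<phi> q1 / \<phi>1 q1)) * \<phi>1 x)"
        using \<phi>1(3) by (intro ext) (simp add: P_def v1_def)
      moreover have "(\<lambda>x. \<phi> x + (- (\<phi> q1 / \<phi>1 q1)) * \<phi>1 x) \<in> lspan S0"
        by (intro lspan_add lspan_smult lspan_base) (auto simp: S0_def that)
      ultimately show ?thesis by simp
    qed
    have v'S0: "\<forall>l\<in>I'. v' l \<in> lspan S0"
      using IH(4) lspan_mono[of T0 S0] PS0 T(3) by blast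
    have v1S0: "v1 \<in> lspan S0"
    proof -
      have "v1 = (\<lambda>x. (1 / \<phi>1 q1) * \<phi>1 x)" by (simp add: v1_def)
      moreover have "(\<lambda>x. (1 / \<phi>1 q1) * \<phi>1 x) \<in> lspan S0"
        by (intro lspan_smult lspan_base) (auto simp: S0_def)
      ultimately show ?thesis by simp
    qed
    define vk where "vk = (\<lambda>x. v1 x + (-1) * (\<Sum>l\<in>I'. v1 (q' l) * v' l x))"
    have sumS0: "(\<lambda>x. \<Sum>l\<in>I'. v1 (q' l) * v' l x) \<in> lspan S0"
      using lspan_sum[OF fI' v'S0, of "\<lambda>l. v1 (q' l)"] by simp
    have vkS0: "vk \<in> lspan S0" unfolding vk_def
      by (rule lspan_add[OF v1S0 lspan_smult[OF sumS0]])
    define q where "q = q'(k0 := q1)"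
    define v where "v = v'(k0 := vk)"
    show ?thesis
    proof (intro exI[of _ S0] exI[of _ q] exI[of _ v] conjI)
      show "S0 \<subseteq> S" using T \<phi>1 by (auto simp: S0_def)
      show "finite S0" using T by (auto simp: S0_def)
      show "q ` I \<subseteq> X" using IH(3) \<phi>1(2) II' by (auto simp: q_def)
      show "\<forall>l\<in>I. v l \<in> lspan S0" using v'S0 vkS0 II' by (auto simp: v_def)
      show "\<forall>\<phi>\<in>S. \<forall>x\<in>X. \<phi> x = (\<Sum>l\<in>I. \<phi> (q l) * v l x)"
      proof (intro ballI)
        fix \<phi> x assume \<phi>: "\<phi> \<in> S" and x: "x \<in> X"
        have s1: "(\<Sum>l\<in>I. \<phi> (q l) * v l x) = \<phi> q1 * vk x + (\<Sum>l\<in>I'. \<phi> (q' l) * v' l x)"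
        proof -
          have "(\<Sum>l\<in>I'. \<phi> (q l) * v l x) = (\<Sum>l\<in>I'. \<phi> (q' l) * v' l x)"
            using II' by (intro sum.cong) (auto simp: q_def v_def)
          then show ?thesis using II' fI' by (simp add: q_def v_def)
        qed
        have "P \<phi> x = (\<Sum>l\<in>I'. P \<phi> (q' l) * v' l x)" using IH(5) \<phi> x by blast
        then have "\<phi> x - \<phi> q1 * v1 x = (\<Sum>l\<in>I'. (\<phi> (q' l) - \<phi> q1 * v1 (q' l)) * v' l x)"
          by (simp add: P_def)
        also have "\<dots> = (\<Sum>l\<in>I'. \<phi> (q' l) * v' l x) - \<phi> q1 * (\<Sum>l\<in>I'. v1 (q' l) * v' l x)"
          by (simp add: left_diff_distrib sum_subtractf sum_distrib_left mult.assoc)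
        finally have "\<phi> x = \<phi> q1 * vk x + (\<Sum>l\<in>I'. \<phi> (q' l) * v' l x)"
          by (simp add: vk_def algebra_simps)
        then show "\<phi> x = (\<Sum>l\<in>I. \<phi> (q l) * v l x)" using s1 by simp
      qed
    qed
  qed
qed



lemma cont_ident: "continuous_map X X (\<lambda>x. x)"
  using continuous_map_id by (simp add: id_def)

lemma tg_mult_cont:
  assumes "topological_group G T" "continuous_map Z T a" "continuous_map Z T b"
  shows "continuous_map Z T (\<lambda>x. a x \<otimes>\<^bsub>G\<^esub> b x)"
proof -
  have "continuous_map (prod_topology T T) T (\<lambda>(x, y). x \<otimes>\<^bsub>G\<^esub> y)"
    using assms(1) by (simp add: topological_group_def)
  from continuous_map_compose[OF continuous_map_pairedI[OF assms(2,3)] this]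
  show ?thesis by (simp add: o_def)
qed

lemma tg_inv_cont:
  assumes "topological_group G T" "continuous_map Z T a"
  shows "continuous_map Z T (\<lambda>x. inv\<^bsub>G\<^esub> (a x))"
proof -
  have "continuous_map T T (\<lambda>x. inv\<^bsub>G\<^esub> x)"
    using assms(1) by (simp add: topological_group_def)
  from continuous_map_compose[OF assms(2) this]
  show ?thesis by (simp add: o_def)
qed

lemma tg_const:
  assumes "topological_group G T" "c \<in> carrier G"
  shows "continuous_map Z T (\<lambda>x. c)"
  using assms by (simp add: topological_group_def)

lemma C0_rtrans:
  assumes tg: "topological_group G T" and w: "C0 T w" and c: "c \<in> carrier G"
  shows "C0 T (\<lambda>x. w (x \<otimes>\<^bsub>G\<^esub> c))"
  unfolding C0_def
proof (intro conjI allI impI)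
  have tsp: "topspace T = carrier G" and grp: "group G"
    using tg by (auto simp: topological_group_def)
  have cm: "continuous_map T T (\<lambda>x. x \<otimes>\<^bsub>G\<^esub> c)"
    by (rule tg_mult_cont[OF tg cont_ident tg_const[OF tg c]])
  show "continuous_map T euclidean (\<lambda>x. w (x \<otimes>\<^bsub>G\<^esub> c))"
    using continuous_map_compose[OF cm, of euclidean w] w by (simp add: C0_def o_def)
  fix e :: real assume "e > 0"
  then obtain K where K: "compactin T K" "\<forall>x\<in>topspace T - K. norm (w x) < e"
    using w unfolding C0_def by blast
  define K' where "K' = (\<lambda>k. k \<otimes>\<^bsub>G\<^esub> inv\<^bsub>G\<^esub> c) ` K"
  have ic: "inv\<^bsub>G\<^esub> c \<in> carrier G" using grp c by (simp add: group.inv_closed)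
  have "compactin T K'" unfolding K'_def
    by (rule image_compactin[OF K(1) tg_mult_cont[OF tg cont_ident tg_const[OF tg ic]]])
  moreover have "norm (w (x \<otimes>\<^bsub>G\<^esub> c)) < e" if x: "x \<in> topspace T - K'" for x
  proof -
    have xc: "x \<otimes>\<^bsub>G\<^esub> c \<in> topspace T" using x c grp tsp by (simp add: group.subgroupE(4) group.is_monoid monoid.m_closed)
    have "x = (x \<otimes>\<^bsub>G\<^esub> c) \<otimes>\<^bsub>G\<^esub> inv\<^bsub>G\<^esub> c" using x c grp tsp
      by (simp add: group.is_monoid monoid.m_assoc group.r_inv ic monoid.r_one)
    then have "x \<otimes>\<^bsub>G\<^esub> c \<notin> K" using x unfolding K'_def by auto
    then show ?thesis using K(2) xc by blast
  qed
  ultimately show "\<exists>K. compactin T K \<and> (\<forall>x\<in>topspace T - K. norm (w (x \<otimes>\<^bsub>G\<^esub> c)) < e)"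
    by blast
qed



theorem corollary1p3:
  fixes G :: "('a, 'b) monoid_scheme" and T :: "'a topology"
    and f g :: "'a \<Rightarrow> complex" and fs gs :: "nat \<Rightarrow> 'a \<Rightarrow> complex" and n :: nat
  assumes "locally_compact_group G T"
    and "C0 T f" and "C0 T g"
    and "\<forall>i\<in>{1..n}. C0 T (fs i) \<and> C0 T (gs i)"
    and "\<exists>x\<in>carrier G. f x \<noteq> 0" and "\<exists>x\<in>carrier G. g x \<noteq> 0"
    and "\<forall>i\<in>{1..n}. \<exists>x\<in>carrier G. fs i x \<noteq> 0"
    and "\<forall>i\<in>{1..n}. \<exists>x\<in>carrier G. gs i x \<noteq> 0"
    and "\<forall>x\<in>carrier G. \<forall>y\<in>carrier G.
           f (x \<otimes>\<^bsub>G\<^esub> y) * g y = (\<Sum>i=1..n. fs i x * gs i y)"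
  shows "\<exists>H. subgroup H G \<and> compactin T H \<and> openin T H \<and>
           (\<exists>f' g' :: nat \<Rightarrow> 'a \<Rightarrow> complex.
              (\<forall>j\<in>{1..n}. C0 T (f' j) \<and> continuous_map (subtopology T H) euclidean (g' j)) \<and>
              (\<forall>x\<in>carrier G. \<forall>y\<in>H. f (x \<otimes>\<^bsub>G\<^esub> y) = (\<Sum>j=1..n. f' j x * g' j y)))"
proof -
  have tg: "topological_group G T" using assms(1) by (simp add: locally_compact_group_def)
  have grp: "group G" and tsp: "topspace T = carrier G"
    using tg by (auto simp: topological_group_def)
  interpret group G by (rule grp)
  have ga1: "inv\<^bsub>G\<^esub> a \<otimes>\<^bsub>G\<^esub> (a \<otimes>\<^bsub>G\<^esub> b) = b" if "a \<in> carrier G" "b \<in> carrier G" for a b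
    using that by (simp add: m_assoc[symmetric])
  have ga2: "a \<otimes>\<^bsub>G\<^esub> (inv\<^bsub>G\<^esub> a \<otimes>\<^bsub>G\<^esub> b) = b" if "a \<in> carrier G" "b \<in> carrier G" for a b
    using that by (simp add: m_assoc[symmetric])
  have ga3: "a \<otimes>\<^bsub>G\<^esub> inv\<^bsub>G\<^esub> b \<otimes>\<^bsub>G\<^esub> b = a" if "a \<in> carrier G" "b \<in> carrier G" for a b
    using that by (simp add: m_assoc)
  have fcont: "continuous_map T euclidean f" and gcont: "continuous_map T euclidean g"
    using assms(2,3) by (auto simp: C0_def)
  obtain a1 where a1: "a1 \<in> carrier G" "g a1 \<noteq> 0" using assms(6) by blast
  obtain x1 where x1: "x1 \<in> carrier G" "f x1 \<noteq> 0" using assms(5) by blast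
  define B where "B = {b \<in> carrier G. g (a1 \<otimes>\<^bsub>G\<^esub> b) \<noteq> 0}"
  define S where "S = (\<lambda>b x. f (x \<otimes>\<^bsub>G\<^esub> b)) ` B"
  define u where "u = (\<lambda>i x. fs i (x \<otimes>\<^bsub>G\<^esub> inv\<^bsub>G\<^esub> a1))"
  have Sspan: "\<forall>\<phi>\<in>S. \<exists>c. \<forall>x\<in>carrier G. \<phi> x = (\<Sum>i\<in>{1..n}. c i * u i x)"
  proof
    fix \<phi> assume "\<phi> \<in> S"
    then obtain b where b: "b \<in> B" "\<phi> = (\<lambda>x. f (x \<otimes>\<^bsub>G\<^esub> b))" by (auto simp: S_def)
    have bc: "b \<in> carrier G" and gb: "g (a1 \<otimes>\<^bsub>G\<^esub> b) \<noteq> 0" using b by (auto simp: B_def)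
    show "\<exists>c. \<forall>x\<in>carrier G. \<phi> x = (\<Sum>i\<in>{1..n}. c i * u i x)"
    proof (intro exI[of _ "\<lambda>i. gs i (a1 \<otimes>\<^bsub>G\<^esub> b) / g (a1 \<otimes>\<^bsub>G\<^esub> b)"] ballI)
      fix x assume x: "x \<in> carrier G"
      have "f (x \<otimes>\<^bsub>G\<^esub> inv\<^bsub>G\<^esub> a1 \<otimes>\<^bsub>G\<^esub> (a1 \<otimes>\<^bsub>G\<^esub> b)) * g (a1 \<otimes>\<^bsub>G\<^esub> b)
          = (\<Sum>i=1..n. fs i (x \<otimes>\<^bsub>G\<^esub> inv\<^bsub>G\<^esub> a1) * gs i (a1 \<otimes>\<^bsub>G\<^esub> b))"
        using assms(9) x a1 bc by simp
      moreover have "x \<otimes>\<^bsub>G\<^esub> inv\<^bsub>G\<^esub> a1 \<otimes>\<^bsub>G\<^esub> (a1 \<otimes>\<^bsub>G\<^esub> b) = x \<otimes>\<^bsub>G\<^esub> b"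
        using x a1 bc by (simp add: m_assoc ga1)
      ultimately have "f (x \<otimes>\<^bsub>G\<^esub> b) = (\<Sum>i=1..n. fs i (x \<otimes>\<^bsub>G\<^esub> inv\<^bsub>G\<^esub> a1) * gs i (a1 \<otimes>\<^bsub>G\<^esub> b)) / g (a1 \<otimes>\<^bsub>G\<^esub> b)"
        using gb by (simp add: field_simps)
      then show "\<phi> x = (\<Sum>i\<in>{1..n}. gs i (a1 \<otimes>\<^bsub>G\<^esub> b) / g (a1 \<otimes>\<^bsub>G\<^esub> b) * u i x)"
        by (simp add: b(2) u_def sum_divide_distrib mult.commute)
    qed
  qed
  have Xne: "carrier G \<noteq> {}" by blast
  obtain S0 q v where I: "S0 \<subseteq> S" "finite S0" "q ` {1..n} \<subseteq> carrier G"
      "\<forall>l\<in>{1..n}. v l \<in> lspan S0"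
      "\<forall>\<phi>\<in>S. \<forall>x\<in>carrier G. \<phi> x = (\<Sum>l\<in>{1..n}. \<phi> (q l) * v l x)"
    using interp[OF _ Xne Sspan] by blast
  obtain B0 where B0: "B0 \<subseteq> B" "finite B0" "S0 = (\<lambda>b x. f (x \<otimes>\<^bsub>G\<^esub> b)) ` B0"
    using finite_subset_image[OF I(2) I(1)[unfolded S_def]] by blast
  have qc: "q l \<in> carrier G" if "l \<in> {1..n}" for l using I(3) that by blast
  define V where "V = {w. \<forall>x\<in>carrier G. w x = (\<Sum>l\<in>{1..n}. w (q l) * v l x)}"
  have V_cong: "w' \<in> V" if "w \<in> V" "\<forall>x\<in>carrier G. w' x = w x" for w w'
    using that qc by (auto simp: V_def)
  have V_zero: "(\<lambda>x. 0) \<in> V" by (simp add: V_def)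
  have V_add: "(\<lambda>x. w x + w' x) \<in> V" if "w \<in> V" "w' \<in> V" for w w'
    using that by (simp add: V_def sum.distrib distrib_right)
  have V_smult: "(\<lambda>x. c * w x) \<in> V" if "w \<in> V" for w c
    using that by (simp add: V_def sum_distrib_left mult.assoc)
  have V_sum: "(\<lambda>x. \<Sum>j\<in>J. c j * w j x) \<in> V" if "finite J" "\<forall>j\<in>J. w j \<in> V" for J c w
    using that
  proof (induction J rule: finite_induct)
    case empty then show ?case using V_zero by simp
  next
    case (insert a J)
    then show ?case using V_add V_smult by simp
  qed
  have SV: "S \<subseteq> V" using I(5) by (auto simp: V_def)
  have oneB: "\<one>\<^bsub>G\<^esub> \<in> B" using a1 by (simp add: B_def)
  have fV: "f \<in> V"
  proof -
    have "(\<lambda>x. f (x \<otimes>\<^bsub>G\<^esub> \<one>\<^bsub>G\<^esub>)) \<in> V" using SV oneB by (auto simp: S_def)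
    then show ?thesis by (rule V_cong) simp
  qed
  define N where "N = {z \<in> carrier G. \<forall>b\<in>B0. g (a1 \<otimes>\<^bsub>G\<^esub> (z \<otimes>\<^bsub>G\<^esub> b)) \<noteq> 0}"
  have B0c: "b \<in> carrier G" if "b \<in> B0" for b using B0(1) that by (auto simp: B_def)
  have NV: "(\<lambda>x. w (x \<otimes>\<^bsub>G\<^esub> z)) \<in> V" if z: "z \<in> N" and w: "w \<in> V" for z w
  proof -
    have zc: "z \<in> carrier G" using z by (simp add: N_def)
    have span: "(\<lambda>x. \<phi> (x \<otimes>\<^bsub>G\<^esub> z)) \<in> V" if "\<phi> \<in> lspan S0" for \<phi>
      using that
    proof (induction rule: lspan.induct)
      case lspan_zero then show ?case using V_zero by simp
    next
      case (lspan_base w)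
      then obtain b where b: "b \<in> B0" "w = (\<lambda>x. f (x \<otimes>\<^bsub>G\<^esub> b))" using B0(3) by blast
      have "z \<otimes>\<^bsub>G\<^esub> b \<in> B" using b z B0c by (auto simp: N_def B_def)
      then have "(\<lambda>x. f (x \<otimes>\<^bsub>G\<^esub> (z \<otimes>\<^bsub>G\<^esub> b))) \<in> V" using SV by (auto simp: S_def)
      then show ?case by (rule V_cong) (use b zc B0c in \<open>simp add: m_assoc\<close>)
    next
      case (lspan_add w w')
      then show ?case using V_add by simp
    next
      case (lspan_smult w c)
      then show ?case using V_smult by simp
    qed
    have "(\<lambda>x. \<Sum>l\<in>{1..n}. w (q l) * v l (x \<otimes>\<^bsub>G\<^esub> z)) \<in> V"
      using V_sum[of "{1..n}" "\<lambda>l x. v l (x \<otimes>\<^bsub>G\<^esub> z)" "\<lambda>l. w (q l)"] span I(4) by simp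
    then show ?thesis
      by (rule V_cong) (use w zc in \<open>simp add: V_def\<close>)
  qed
  have Nopen: "openin T N"
  proof -
    have "N = (\<Inter>b\<in>B0. {z \<in> topspace T. g (a1 \<otimes>\<^bsub>G\<^esub> (z \<otimes>\<^bsub>G\<^esub> b)) \<in> - {0}}) \<inter> topspace T"
      by (auto simp: N_def tsp)
    moreover have "openin T ((\<Inter>b\<in>B0. {z \<in> topspace T. g (a1 \<otimes>\<^bsub>G\<^esub> (z \<otimes>\<^bsub>G\<^esub> b)) \<in> - {0}}) \<inter> topspace T)"
    proof (rule openin_INT[OF B0(2)])
      fix b assume b: "b \<in> B0"
      have cm: "continuous_map T T (\<lambda>z. a1 \<otimes>\<^bsub>G\<^esub> (z \<otimes>\<^bsub>G\<^esub> b))"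
        by (intro tg_mult_cont[OF tg] tg_const[OF tg] cont_ident) (use a1 B0c b in auto)
      have "continuous_map T euclidean (\<lambda>z. g (a1 \<otimes>\<^bsub>G\<^esub> (z \<otimes>\<^bsub>G\<^esub> b)))"
        using continuous_map_compose[OF cm gcont] by (simp add: o_def)
      then show "openin T {z \<in> topspace T. g (a1 \<otimes>\<^bsub>G\<^esub> (z \<otimes>\<^bsub>G\<^esub> b)) \<in> - {0}}"
        by (rule openin_continuous_map_preimage) (simp add: open_Compl)
    qed
    ultimately show ?thesis by simp
  qed
  define N' where "N' = {z \<in> N. inv\<^bsub>G\<^esub> z \<in> N}"
  have N'open: "openin T N'"
  proof -
    have "N' = N \<inter> {z \<in> topspace T. inv\<^bsub>G\<^esub> z \<in> N}" by (auto simp: N'_def N_def tsp)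
    moreover have "openin T {z \<in> topspace T. inv\<^bsub>G\<^esub> z \<in> N}"
      by (rule openin_continuous_map_preimage[OF tg_inv_cont[OF tg cont_ident] Nopen])
    ultimately show ?thesis using Nopen by (simp add: openin_Int)
  qed
  have oneN': "\<one>\<^bsub>G\<^esub> \<in> N'" using B0c B0(1) by (auto simp: N'_def N_def B_def)
  define H where "H = {z \<in> carrier G. (\<forall>w\<in>V. (\<lambda>x. w (x \<otimes>\<^bsub>G\<^esub> z)) \<in> V) \<and>
                                     (\<forall>w\<in>V. (\<lambda>x. w (x \<otimes>\<^bsub>G\<^esub> inv\<^bsub>G\<^esub> z)) \<in> V)}"
  have N'H: "N' \<subseteq> H" using NV by (auto simp: H_def N'_def N_def)
  have comp: "(\<lambda>x. w (x \<otimes>\<^bsub>G\<^esub> (z \<otimes>\<^bsub>G\<^esub> z'))) \<in> V"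
    if "z \<in> carrier G" "z' \<in> carrier G" "\<forall>w\<in>V. (\<lambda>x. w (x \<otimes>\<^bsub>G\<^esub> z)) \<in> V"
       "\<forall>w\<in>V. (\<lambda>x. w (x \<otimes>\<^bsub>G\<^esub> z')) \<in> V" "w \<in> V" for z z' w
  proof -
    have "(\<lambda>x. w (x \<otimes>\<^bsub>G\<^esub> z')) \<in> V" using that by blast
    from bspec[OF that(3) this] have "(\<lambda>y. w (y \<otimes>\<^bsub>G\<^esub> z \<otimes>\<^bsub>G\<^esub> z')) \<in> V" by simp
    then show ?thesis by (rule V_cong) (use that in \<open>simp add: m_assoc\<close>)
  qed
  have sg: "subgroup H G"
  proof
    show "H \<subseteq> carrier G" by (auto simp: H_def)
  next
    fix z z' assume zH: "z \<in> H" and z'H: "z' \<in> H"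
    have zc: "z \<in> carrier G" and z'c: "z' \<in> carrier G" using zH z'H by (auto simp: H_def)
    have hz: "\<forall>w\<in>V. (\<lambda>x. w (x \<otimes>\<^bsub>G\<^esub> z)) \<in> V" and hzi: "\<forall>w\<in>V. (\<lambda>x. w (x \<otimes>\<^bsub>G\<^esub> inv\<^bsub>G\<^esub> z)) \<in> V"
      using zH by (auto simp: H_def)
    have hz': "\<forall>w\<in>V. (\<lambda>x. w (x \<otimes>\<^bsub>G\<^esub> z')) \<in> V" and hz'i: "\<forall>w\<in>V. (\<lambda>x. w (x \<otimes>\<^bsub>G\<^esub> inv\<^bsub>G\<^esub> z')) \<in> V"
      using z'H by (auto simp: H_def)
    have eq: "inv\<^bsub>G\<^esub> (z \<otimes>\<^bsub>G\<^esub> z') = inv\<^bsub>G\<^esub> z' \<otimes>\<^bsub>G\<^esub> inv\<^bsub>G\<^esub> z"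
      using zc z'c by (rule inv_mult_group)
    have A: "\<forall>w\<in>V. (\<lambda>x. w (x \<otimes>\<^bsub>G\<^esub> (z \<otimes>\<^bsub>G\<^esub> z'))) \<in> V"
      using comp[OF zc z'c hz hz'] by blast
    have B': "\<forall>w\<in>V. (\<lambda>x. w (x \<otimes>\<^bsub>G\<^esub> inv\<^bsub>G\<^esub> (z \<otimes>\<^bsub>G\<^esub> z'))) \<in> V"
      unfolding eq using comp[OF inv_closed[OF z'c] inv_closed[OF zc] hz'i hzi] by blast
    show "z \<otimes>\<^bsub>G\<^esub> z' \<in> H"
      unfolding H_def using A B' zc z'c by blast
  next
    show "\<one>\<^bsub>G\<^esub> \<in> H" using N'H oneN' by blast
  next
    fix z assume "z \<in> H"
    then show "inv\<^bsub>G\<^esub> z \<in> H" by (auto simp: H_def)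
  qed
  have Hc: "H \<subseteq> carrier G" by (auto simp: H_def)
  define U where "U = (\<lambda>z. {x \<in> topspace T. inv\<^bsub>G\<^esub> z \<otimes>\<^bsub>G\<^esub> x \<in> N'})"
  have Uopen: "openin T (U z)" if "z \<in> carrier G" for z
    unfolding U_def
    by (rule openin_continuous_map_preimage[OF _ N'open])
       (intro tg_mult_cont[OF tg] tg_const[OF tg] cont_ident, use that in simp)
  have zU: "z \<in> U z" if "z \<in> carrier G" for z
    using that oneN' by (simp add: U_def tsp)
  have Hopen: "openin T H"
  proof (subst openin_subopen, intro ballI)
    fix z assume z: "z \<in> H"
    have "U z \<subseteq> H"
    proof
      fix x assume x: "x \<in> U z"
      then have "inv\<^bsub>G\<^esub> z \<otimes>\<^bsub>G\<^esub> x \<in> H" using N'H by (auto simp: U_def)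
      then have "z \<otimes>\<^bsub>G\<^esub> (inv\<^bsub>G\<^esub> z \<otimes>\<^bsub>G\<^esub> x) \<in> H" using z sg by (simp add: subgroup.m_closed)
      then show "x \<in> H" using x z Hc by (simp add: ga2 U_def tsp subset_iff)
    qed
    then show "\<exists>T'. openin T T' \<and> z \<in> T' \<and> T' \<subseteq> H" using Uopen zU z Hc by blast
  qed
  have Hclosed: "closedin T H"
    unfolding closedin_def
  proof (intro conjI)
    show "H \<subseteq> topspace T" using Hc tsp by simp
    show "openin T (topspace T - H)"
    proof (subst openin_subopen, intro ballI)
      fix z assume z: "z \<in> topspace T - H"
      have "U z \<subseteq> topspace T - H"
      proof
        fix x assume x: "x \<in> U z"
        have xc: "x \<in> carrier G" using x by (simp add: U_def tsp)
        have zc: "z \<in> carrier G" using z tsp by simp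
        have "inv\<^bsub>G\<^esub> z \<otimes>\<^bsub>G\<^esub> x \<in> H" using x N'H by (auto simp: U_def)
        moreover have "x \<notin> H"
        proof
          assume "x \<in> H"
          with \<open>inv\<^bsub>G\<^esub> z \<otimes>\<^bsub>G\<^esub> x \<in> H\<close> have "x \<otimes>\<^bsub>G\<^esub> inv\<^bsub>G\<^esub> (inv\<^bsub>G\<^esub> z \<otimes>\<^bsub>G\<^esub> x) \<in> H"
            using sg by (simp add: subgroup.m_closed subgroup.m_inv_closed)
          moreover have "x \<otimes>\<^bsub>G\<^esub> inv\<^bsub>G\<^esub> (inv\<^bsub>G\<^esub> z \<otimes>\<^bsub>G\<^esub> x) = z"
            using xc zc by (simp add: inv_mult_group m_assoc[symmetric])
          ultimately show False using z by simp
        qed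
        ultimately show "x \<in> topspace T - H" using x by (simp add: U_def)
      qed
      then show "\<exists>T'. openin T T' \<and> z \<in> T' \<and> T' \<subseteq> topspace T - H"
        using Uopen zU z tsp by (metis DiffD1)
    qed
  qed
  have vC0: "C0 T (v l)" if "l \<in> {1..n}" for l
  proof -
    have "\<forall>w\<in>S0. C0 T w" using B0(3) B0c C0_rtrans[OF tg assms(2)] by blast
    then show ?thesis using C0_lspan I(4) that by blast
  qed
  have Hcompact: "compactin T H"
  proof -
    obtain Bf where Bf: "\<forall>x\<in>topspace T. norm (f x) \<le> Bf" using C0_bounded[OF assms(2)] by blast
    have "norm (f x1) \<le> Bf" using Bf x1 tsp by simp
    moreover have "norm (f x1) > 0" using x1 by simp
    ultimately have Bfpos: "Bf > 0" by linarith
    define \<epsilon> where "\<epsilon> = norm (f x1) / Bf"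
    have epos: "\<epsilon> > 0" using Bfpos x1 by (simp add: \<epsilon>_def)
    define \<delta> where "\<delta> = \<epsilon> / (real n + 1)"
    have dpos: "\<delta> > 0" using epos by (simp add: \<delta>_def)
    have "\<forall>l\<in>{1..n}. \<exists>K. compactin T K \<and> (\<forall>x\<in>topspace T - K. norm (v l x) < \<delta>)"
      using vC0 dpos unfolding C0_def by blast
    from bchoice[OF this] obtain Kf where Kf: "\<forall>l\<in>{1..n}. compactin T (Kf l) \<and> (\<forall>x\<in>topspace T - Kf l. norm (v l x) < \<delta>)"
      by blast
    define K where "K = \<Union> (Kf ` {1..n})"
    have Kc: "compactin T K" unfolding K_def using Kf by (intro compactin_Union) auto
    have outK: "(\<Sum>l\<in>{1..n}. norm (v l x)) < \<epsilon>" if "x \<in> topspace T - K" for x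
    proof -
      have "(\<Sum>l\<in>{1..n}. norm (v l x)) \<le> (\<Sum>l\<in>{1..n}. \<delta>)"
        using Kf that by (intro sum_mono) (auto simp: K_def less_imp_le)
      also have "\<dots> = real n * \<delta>" by simp
      also have "\<dots> < \<epsilon>" using epos by (simp add: \<delta>_def field_simps)
      finally show ?thesis .
    qed
    define Cs where "Cs = (\<lambda>k. inv\<^bsub>G\<^esub> (inv\<^bsub>G\<^esub> x1 \<otimes>\<^bsub>G\<^esub> k)) ` K"
    have Csc: "compactin T Cs" unfolding Cs_def
      by (rule image_compactin[OF Kc tg_inv_cont[OF tg tg_mult_cont[OF tg tg_const[OF tg] cont_ident]]])
         (use x1 in simp)
    have "H \<subseteq> Cs"
    proof
      fix z assume z: "z \<in> H"
      have zc: "z \<in> carrier G" using z Hc by blast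
      define y where "y = x1 \<otimes>\<^bsub>G\<^esub> inv\<^bsub>G\<^esub> z"
      have yc: "y \<in> carrier G" using zc x1 by (simp add: y_def)
      have "(\<lambda>x. f (x \<otimes>\<^bsub>G\<^esub> z)) \<in> V" using z fV by (auto simp: H_def)
      then have "f (y \<otimes>\<^bsub>G\<^esub> z) = (\<Sum>l\<in>{1..n}. f (q l \<otimes>\<^bsub>G\<^esub> z) * v l y)"
        using yc by (auto simp: V_def)
      moreover have "y \<otimes>\<^bsub>G\<^esub> z = x1" using zc x1 by (simp add: y_def ga3)
      ultimately have eq: "f x1 = (\<Sum>l\<in>{1..n}. f (q l \<otimes>\<^bsub>G\<^esub> z) * v l y)" by simp
      have "y \<in> K"
      proof (rule ccontr)
        assume "y \<notin> K"
        then have "(\<Sum>l\<in>{1..n}. norm (v l y)) < \<epsilon>" using outK yc tsp by simp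
        have "norm (f x1) \<le> (\<Sum>l\<in>{1..n}. norm (f (q l \<otimes>\<^bsub>G\<^esub> z) * v l y))"
          unfolding eq by (rule norm_sum)
        also have "\<dots> \<le> (\<Sum>l\<in>{1..n}. Bf * norm (v l y))"
        proof (rule sum_mono)
          fix l assume l: "l \<in> {1..n}"
          have "norm (f (q l \<otimes>\<^bsub>G\<^esub> z)) \<le> Bf" using Bf qc[OF l] zc tsp by simp
          then show "norm (f (q l \<otimes>\<^bsub>G\<^esub> z) * v l y) \<le> Bf * norm (v l y)"
            by (simp add: norm_mult mult_right_mono)
        qed
        also have "\<dots> = Bf * (\<Sum>l\<in>{1..n}. norm (v l y))" by (simp add: sum_distrib_left)
        also have "\<dots> < Bf * \<epsilon>"
          using \<open>(\<Sum>l\<in>{1..n}. norm (v l y)) < \<epsilon>\<close> Bfpos by simp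
        also have "\<dots> = norm (f x1)" using Bfpos by (simp add: \<epsilon>_def)
        finally show False by simp
      qed
      moreover have "z = inv\<^bsub>G\<^esub> (inv\<^bsub>G\<^esub> x1 \<otimes>\<^bsub>G\<^esub> y)"
        using zc x1 by (simp add: y_def ga1)
      ultimately show "z \<in> Cs" unfolding Cs_def by blast
    qed
    then show ?thesis by (rule closed_compactin[OF Csc _ Hclosed])
  qed
  have P1: "\<forall>j\<in>{1..n}. C0 T (v j) \<and> continuous_map (subtopology T H) euclidean (\<lambda>y. f (q j \<otimes>\<^bsub>G\<^esub> y))"
  proof
    fix j assume j: "j \<in> {1..n}"
    have cm: "continuous_map T T (\<lambda>y. q j \<otimes>\<^bsub>G\<^esub> y)"
      by (intro tg_mult_cont[OF tg] tg_const[OF tg] cont_ident) (use qc j in simp)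
    have "continuous_map T euclidean (\<lambda>y. f (q j \<otimes>\<^bsub>G\<^esub> y))"
      using continuous_map_compose[OF cm fcont] by (simp add: o_def)
    then show "C0 T (v j) \<and> continuous_map (subtopology T H) euclidean (\<lambda>y. f (q j \<otimes>\<^bsub>G\<^esub> y))"
      using vC0 j continuous_map_from_subtopology by blast
  qed
  have P2: "\<forall>x\<in>carrier G. \<forall>y\<in>H. f (x \<otimes>\<^bsub>G\<^esub> y) = (\<Sum>j=1..n. v j x * f (q j \<otimes>\<^bsub>G\<^esub> y))"
  proof (intro ballI)
    fix x y assume x: "x \<in> carrier G" and y: "y \<in> H"
    have "(\<lambda>x. f (x \<otimes>\<^bsub>G\<^esub> y)) \<in> V" using y fV by (auto simp: H_def)
    then show "f (x \<otimes>\<^bsub>G\<^esub> y) = (\<Sum>j=1..n. v j x * f (q j \<otimes>\<^bsub>G\<^esub> y))"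
      using x by (auto simp: V_def mult.commute)
  qed
  show ?thesis
    apply (rule exI[of _ H])
    apply (intro conjI sg Hcompact Hopen)
    apply (rule exI[of _ v], rule exI[of _ "\<lambda>l y. f (q l \<otimes>\<^bsub>G\<^esub> y)"])
    using P1 P2 by simp
qed


end
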